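(* Let $\alpha,\beta$ be real (or complex) parameters, let $n,p$ be non-negative integers ($p\ge1$), and let $k_1,\ldots,k_p$ be non-negative integers with $k=k_1+\cdots+k_p$. Then $$\binom{k}{k_1,\ldots,k_p}\genfrac{\lfloor}{\rfloor}{0pt}{}{n}{k}^{\alpha,\beta}=\sum_{\substack{l_1+\cdots+l_p=n\\ l_i\ge0}}\binom{n}{l_1,\ldots,l_p}\genfrac{\lfloor}{\rfloor}{0pt}{}{l_1}{k_1}^{\alpha,\beta}\cdots\genfrac{\lfloor}{\rfloor}{0pt}{}{l_p}{k_p}^{\alpha,\beta}.$$
   Context: For parameters $\alpha,\beta$, the generalized Stirling numbers $\genfrac{\lfloor}{\rfloor}{0pt}{}{n}{k}^{\alpha,\beta}$, $0\le k\le n$, are defined by the polynomial identity in $x$ $$x(x+\alpha)\cdots(x+(n-1)\alpha)=\sum_{k=0}^{n}\genfrac{\lfloor}{\rfloor}{0pt}{}{n}{k}^{\alpha,\beta}\,x(x-\beta)\cdots(x-(k-1)\beta),$$ (empty products equal $1$), and $\genfrac{\lfloor}{\rfloor}{0pt}{}{n}{k}^{\alpha,\beta}=0$ for $k<0$ or $k>n$. $\binom{m}{m_1,\ldots,m_p}=\frac{m!}{m_1!\cdots m_p!}$ denotes the multinomial coefficient. *)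

theory Defs
  imports "HOL-Computational_Algebra.Polynomial"
begin

definition rise_poly :: "'a::field \<Rightarrow> nat \<Rightarrow> 'a poly" where
  "rise_poly a n = (\<Prod>i<n. [:of_nat i * a, 1:])"

definition fall_poly :: "'a::field \<Rightarrow> nat \<Rightarrow> 'a poly" where
  "fall_poly b k = (\<Prod>i<k. [:- (of_nat i * b), 1:])"

definition gen_stirling :: "'a::field \<Rightarrow> 'a \<Rightarrow> nat \<Rightarrow> nat \<Rightarrow> 'a" where
  "gen_stirling a b n k =
     (THE c. (\<forall>j>n. c j = 0) \<and>
             rise_poly a n = (\<Sum>j\<le>n. smult (c j) (fall_poly b j))) k"

definition multinomial :: "nat \<Rightarrow> nat list \<Rightarrow> nat" where
  "multinomial m ms = fact m div (\<Prod>x\<leftarrow>ms. fact x)"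

end

theory Submission
  imports Defs
begin

fun gs :: "'a::field_char_0 \<Rightarrow> 'a \<Rightarrow> nat \<Rightarrow> nat \<Rightarrow> 'a" where
  "gs a b 0 k = (if k = 0 then 1 else 0)"
| "gs a b (Suc n) k = (if k = 0 then 0 else gs a b n (k-1)) + (of_nat k * b + of_nat n * a) * gs a b n k"

lemma gs_zero: "k > n \<Longrightarrow> gs a b n k = 0"
  by (induction n arbitrary: k) auto

lemma fall_Suc: "fall_poly b (Suc k) = fall_poly b k * [:- (of_nat k * b), 1:]"
  by (simp add: fall_poly_def)

lemma rise_Suc: "rise_poly a (Suc k) = rise_poly a k * [:of_nat k * a, 1:]"
  by (simp add: rise_poly_def)

lemma fall_deg: "degree (fall_poly b k) = k \<and> coeff (fall_poly b k) k = 1"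
proof (induction k)
  case 0 then show ?case by (simp add: fall_poly_def)
next
  case (Suc k)
  have nz: "fall_poly b k \<noteq> 0" using Suc by auto
  have "degree (fall_poly b (Suc k)) = Suc k"
    unfolding fall_Suc using Suc nz degree_mult_eq[of "fall_poly b k" "[:- (of_nat k * b), 1:]"]
    by (simp del: mult_pCons_right)
  moreover have "coeff (fall_poly b (Suc k)) (Suc k) = 1"
    unfolding fall_Suc using Suc coeff_mult_degree_sum[of "fall_poly b k" "[:- (of_nat k * b), 1:]"]
    by (simp del: mult_pCons_right)
  ultimately show ?case by simp
qed

lemma fall_coeff_high: "j < m \<Longrightarrow> coeff (fall_poly b j) m = 0"
  using fall_deg[of b j] by (simp add: coeff_eq_0)

lemma indep: "(\<Sum>j\<le>n. smult (e j) (fall_poly b j)) = 0 \<Longrightarrow> j \<le> n \<Longrightarrow> e j = 0"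
proof (induction n arbitrary: j)
  case 0 then show ?case using fall_deg[of b 0] by (auto simp: fall_poly_def)
next
  case (Suc n)
  have "coeff (\<Sum>j\<le>Suc n. smult (e j) (fall_poly b j)) (Suc n)
      = (\<Sum>j\<le>n. e j * coeff (fall_poly b j) (Suc n)) + e (Suc n) * coeff (fall_poly b (Suc n)) (Suc n)"
    by (simp add: coeff_sum)
  also have "\<dots> = e (Suc n)"
    using fall_deg[of b "Suc n"] by (simp add: fall_coeff_high)
  finally have eS: "e (Suc n) = 0" using Suc.prems(1) by (simp del: sum.atMost_Suc)
  then have "(\<Sum>j\<le>n. smult (e j) (fall_poly b j)) = 0" using Suc.prems(1) by simp
  then show ?case using Suc eS by (cases "j = Suc n") auto
qed

lemma fall_mult: "fall_poly b j * [:c, 1:] = fall_poly b (Suc j) + smult (c + of_nat j * b) (fall_poly b j)"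
  by (simp add: fall_Suc algebra_simps smult_add_left)

lemma exist: "rise_poly a n = (\<Sum>j\<le>n. smult (gs a b n j) (fall_poly b j))"
proof (induction n)
  case 0 then show ?case by (simp add: rise_poly_def fall_poly_def)
next
  case (Suc n)
  have "rise_poly a (Suc n) = (\<Sum>j\<le>n. smult (gs a b n j) (fall_poly b j * [:of_nat n * a, 1:]))"
    by (simp add: rise_Suc Suc sum_distrib_right del: mult_pCons_right)
  also have "\<dots> = (\<Sum>j\<le>n. smult (gs a b n j) (fall_poly b (Suc j)))
      + (\<Sum>j\<le>n. smult ((of_nat j * b + of_nat n * a) * gs a b n j) (fall_poly b j))"
    by (simp add: fall_mult sum.distrib smult_add_right algebra_simps del: mult_pCons_right)
  also have "(\<Sum>j\<le>n. smult ((of_nat j * b + of_nat n * a) * gs a b n j) (fall_poly b j))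
      = (\<Sum>j\<le>Suc n. smult ((of_nat j * b + of_nat n * a) * gs a b n j) (fall_poly b j))"
    by (simp add: gs_zero)
  also have "(\<Sum>j\<le>n. smult (gs a b n j) (fall_poly b (Suc j)))
      = (\<Sum>j\<le>Suc n. smult (if j = 0 then 0 else gs a b n (j-1)) (fall_poly b j))"
    by (simp add: sum.atMost_Suc_shift del: sum.atMost_Suc)
  finally show ?case
    by (simp add: sum.distrib[symmetric] smult_add_left del: sum.atMost_Suc)
qed

lemma gen_stirling_gs: "gen_stirling a b n k = gs a b n k"
proof -
  have "(THE c. (\<forall>j>n. c j = 0) \<and> rise_poly a n = (\<Sum>j\<le>n. smult (c j) (fall_poly b j))) = gs a b n"
  proof (rule the_equality)
    show "(\<forall>j>n. gs a b n j = 0) \<and> rise_poly a n = (\<Sum>j\<le>n. smult (gs a b n j) (fall_poly b j))"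
      using gs_zero exist by blast
  next
    fix c assume c: "(\<forall>j>n. c j = 0) \<and> rise_poly a n = (\<Sum>j\<le>n. smult (c j) (fall_poly b j))"
    have "(\<Sum>j\<le>n. smult (c j - gs a b n j) (fall_poly b j)) = 0"
      using c exist[of a n b] by (simp add: smult_diff_left sum_subtractf)
    then have "\<And>j. j \<le> n \<Longrightarrow> c j = gs a b n j" using indep by fastforce
    then show "c = gs a b n" using c gs_zero by (metis ext not_le)
  qed
  then show ?thesis unfolding gen_stirling_def by simp
qed

lemma binom_conv:
  fixes F :: "nat \<Rightarrow> 'a::comm_ring_1"
  shows "(\<Sum>l\<le>Suc n. of_nat (Suc n choose l) * F l) = (\<Sum>l\<le>n. of_nat (n choose l) * (F (Suc l) + F l))"
proof -
  have "(\<Sum>l\<le>Suc n. of_nat (Suc n choose l) * F l) = F 0 + (\<Sum>l\<le>n. of_nat (Suc n choose Suc l) * F (Suc l))"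
    by (simp add: sum.atMost_Suc_shift del: sum.atMost_Suc)
  also have "\<dots> = (\<Sum>l\<le>n. of_nat (n choose l) * F (Suc l)) + (F 0 + (\<Sum>l\<le>n. of_nat (n choose Suc l) * F (Suc l)))"
    by (simp add: algebra_simps sum.distrib)
  also have "F 0 + (\<Sum>l\<le>n. of_nat (n choose Suc l) * F (Suc l)) = (\<Sum>l\<le>Suc n. of_nat (n choose l) * F l)"
    by (simp add: sum.atMost_Suc_shift del: sum.atMost_Suc)
  also have "\<dots> = (\<Sum>l\<le>n. of_nat (n choose l) * F l)" by (simp add: binomial_eq_0)
  finally show ?thesis by (simp add: algebra_simps sum.distrib)
qed

lemma prod2: "of_nat ((k1+k2) choose k1) * gs a b n (k1+k2) =
   (\<Sum>l\<le>n. of_nat (n choose l) * (gs a b l k1 * gs a b (n-l) k2))"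
proof (induction n arbitrary: k1 k2)
  case 0 then show ?case by simp
next
  case (Suc n)
  define sm where "sm = (\<lambda>m k. if k = 0 then 0 else gs a b m (k - 1))"
  have gsS: "\<And>m k. gs a b (Suc m) k = sm m k + (of_nat k * b + of_nat m * a) * gs a b m k"
    by (simp add: sm_def)
  have "(\<Sum>l\<le>Suc n. of_nat (Suc n choose l) * (gs a b l k1 * gs a b (Suc n - l) k2))
     = (\<Sum>l\<le>n. of_nat (n choose l) * (gs a b (Suc l) k1 * gs a b (Suc n - Suc l) k2 + gs a b l k1 * gs a b (Suc n - l) k2))"
    by (rule binom_conv)
  also have "\<dots> = (\<Sum>l\<le>n. of_nat (n choose l) * (sm l k1 * gs a b (n - l) k2))
      + (\<Sum>l\<le>n. of_nat (n choose l) * (gs a b l k1 * sm (n - l) k2))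
      + (of_nat (k1+k2) * b + of_nat n * a) * (\<Sum>l\<le>n. of_nat (n choose l) * (gs a b l k1 * gs a b (n - l) k2))"
  proof -
    have "\<And>l. l \<le> n \<Longrightarrow> of_nat (n choose l) * (gs a b (Suc l) k1 * gs a b (Suc n - Suc l) k2 + gs a b l k1 * gs a b (Suc n - l) k2)
       = of_nat (n choose l) * (sm l k1 * gs a b (n - l) k2) + of_nat (n choose l) * (gs a b l k1 * sm (n - l) k2)
         + (of_nat (k1+k2) * b + of_nat n * a) * (of_nat (n choose l) * (gs a b l k1 * gs a b (n - l) k2))"
    proof -
      fix l assume l: "l \<le> n"
      have e: "Suc n - l = Suc (n - l)" using l by simp
      have r: "(of_nat (n - l) :: 'a) = of_nat n - of_nat l" using l by (simp add: of_nat_diff)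
      show "?thesis l" unfolding e gsS r by (simp add: algebra_simps)
    qed
    then show ?thesis by (simp add: sum.distrib sum_distrib_left)
  qed
  also have "(\<Sum>l\<le>n. of_nat (n choose l) * (sm l k1 * gs a b (n - l) k2))
     = (if k1 = 0 then 0 else of_nat ((k1 - 1 + k2) choose (k1 - 1)) * gs a b n (k1 - 1 + k2))"
    using Suc.IH[of "k1 - 1" k2] by (cases k1) (simp_all add: sm_def)
  also have "(\<Sum>l\<le>n. of_nat (n choose l) * (gs a b l k1 * sm (n - l) k2))
     = (if k2 = 0 then 0 else of_nat ((k1 + (k2 - 1)) choose k1) * gs a b n (k1 + (k2 - 1)))"
    using Suc.IH[of k1 "k2 - 1"] by (cases k2) (simp_all add: sm_def)
  also have "(\<Sum>l\<le>n. of_nat (n choose l) * (gs a b l k1 * gs a b (n - l) k2))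
     = of_nat ((k1+k2) choose k1) * gs a b n (k1+k2)"
    using Suc.IH[of k1 k2] by simp
  finally have R: "(\<Sum>l\<le>Suc n. of_nat (Suc n choose l) * (gs a b l k1 * gs a b (Suc n - l) k2)) =
     (if k1 = 0 then 0 else of_nat ((k1 - 1 + k2) choose (k1 - 1)) * gs a b n (k1 - 1 + k2)) +
     (if k2 = 0 then 0 else of_nat ((k1 + (k2 - 1)) choose k1) * gs a b n (k1 + (k2 - 1))) +
     (of_nat (k1+k2) * b + of_nat n * a) * (of_nat ((k1+k2) choose k1) * gs a b n (k1+k2))" .
  have L: "of_nat ((k1+k2) choose k1) * gs a b (Suc n) (k1+k2) =
     (if k1 = 0 then 0 else of_nat ((k1 - 1 + k2) choose (k1 - 1)) * gs a b n (k1 - 1 + k2)) +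
     (if k2 = 0 then 0 else of_nat ((k1 + (k2 - 1)) choose k1) * gs a b n (k1 + (k2 - 1))) +
     (of_nat (k1+k2) * b + of_nat n * a) * (of_nat ((k1+k2) choose k1) * gs a b n (k1+k2))"
  proof (cases k1)
    case 0 then show ?thesis by (cases k2) (simp_all add: algebra_simps)
  next
    case (Suc j1)
    show ?thesis
    proof (cases k2)
      case 0 then show ?thesis using Suc by (simp add: algebra_simps)
    next
      case (Suc j2)
      have "(k1 + k2) choose k1 = ((j1 + Suc j2) choose j1) + ((j1 + Suc j2) choose Suc j1)"
        using \<open>k1 = Suc j1\<close> Suc by simp
      then show ?thesis using \<open>k1 = Suc j1\<close> Suc by (simp add: algebra_simps)
    qed
  qed
  show ?case using L R by simp
qed

lemma fact_add_binom: "fact (l + S) = ((l + S) choose l) * fact l * (fact S :: nat)"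
  using binomial_fact_lemma[of l "l + S"] by (simp add: algebra_simps)

lemma prod_fact_dvd: "(\<Prod>x\<leftarrow>ls. fact x) dvd (fact (sum_list ls) :: nat)"
proof (induction ls)
  case Nil then show ?case by simp
next
  case (Cons l ls)
  then show ?case by (simp add: fact_add_binom mult_dvd_mono)
qed

lemma multinomial_Cons: "multinomial (l + sum_list ls) (l # ls) = ((l + sum_list ls) choose l) * multinomial (sum_list ls) ls"
proof -
  define P where "P = (\<Prod>x\<leftarrow>ls. fact x :: nat)"
  define m where "m = fact (sum_list ls) div P"
  have P0: "P > 0" unfolding P_def by (induction ls) auto
  have fS: "fact (sum_list ls) = m * P" unfolding m_def P_def using prod_fact_dvd[of ls] by simp
  have "multinomial (l + sum_list ls) (l # ls) = (((l + sum_list ls) choose l) * m) * (fact l * P) div (fact l * P)"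
  proof -
    have Pd: "prod_list (map fact ls) = P" by (simp add: P_def)
    show ?thesis unfolding multinomial_def by (simp add: Pd fact_add_binom fS algebra_simps)
  qed
  also have "\<dots> = ((l + sum_list ls) choose l) * m"
    by (rule nonzero_mult_div_cancel_right) (use P0 in simp)
  finally show ?thesis unfolding multinomial_def m_def P_def by simp
qed

lemma gs_n0: "gs a b n 0 = (if n = 0 then 1 else 0)"
  by (induction n) auto

lemma fin_lists: "finite {ls :: nat list. length ls = p \<and> sum_list ls = n}"
proof (rule finite_subset)
  show "{ls :: nat list. length ls = p \<and> sum_list ls = n} \<subseteq> {ls. set ls \<subseteq> {..n} \<and> length ls = p}"
    using member_le_sum_list by fastforce
  show "finite {ls. set ls \<subseteq> {..n} \<and> length ls = p}"
    by (rule finite_lists_length_eq) simp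
qed

lemma set_decomp: "{ls. length ls = Suc p \<and> sum_list ls = (n::nat)} =
   (\<lambda>(l, ls). l # ls) ` (SIGMA l:{..n}. {ls. length ls = p \<and> sum_list ls = n - l})"
proof (rule set_eqI)
  fix xs :: "nat list"
  show "xs \<in> {ls. length ls = Suc p \<and> sum_list ls = n} \<longleftrightarrow>
     xs \<in> (\<lambda>(l, ls). l # ls) ` (SIGMA l:{..n}. {ls. length ls = p \<and> sum_list ls = n - l})"
    by (cases xs) auto
qed

lemma main: "of_nat (multinomial (sum_list ks) ks) * gs a b n (sum_list ks) =
   (\<Sum>ls\<in>{ls. length ls = length ks \<and> sum_list ls = n}.
       of_nat (multinomial n ls) * (\<Prod>i<length ks. gs a b (ls ! i) (ks ! i)))"
proof (induction ks arbitrary: n)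
  case Nil
  have "{ls :: nat list. length ls = 0 \<and> sum_list ls = n} = (if n = 0 then {[]} else {})" by auto
  then show ?case by (simp add: gs_n0 multinomial_def)
next
  case (Cons k ks)
  define K where "K = sum_list ks"
  define p where "p = length ks"
  have inj: "inj_on (\<lambda>(l, ls). l # (ls :: nat list)) X" for X by (auto simp: inj_on_def)
  have "(\<Sum>ls\<in>{ls. length ls = length (k # ks) \<and> sum_list ls = n}.
       of_nat (multinomial n ls) * (\<Prod>i<length (k # ks). gs a b (ls ! i) ((k # ks) ! i)))
    = (\<Sum>l\<le>n. \<Sum>ls\<in>{ls. length ls = p \<and> sum_list ls = n - l}.
       of_nat (multinomial n (l # ls)) * (gs a b l k * (\<Prod>i<p. gs a b (ls ! i) (ks ! i))))"
    unfolding p_def[symmetric] length_Cons set_decomp sum.reindex[OF inj]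
    by (subst sum.Sigma) (simp_all add: fin_lists prod.lessThan_Suc_shift split_def del: prod.lessThan_Suc)
  also have "\<dots> = (\<Sum>l\<le>n. of_nat (n choose l) * gs a b l k *
       (\<Sum>ls\<in>{ls. length ls = p \<and> sum_list ls = n - l}.
         of_nat (multinomial (n - l) ls) * (\<Prod>i<p. gs a b (ls ! i) (ks ! i))))"
  proof (rule sum.cong[OF refl])
    fix l assume l: "l \<in> {..n}"
    show "(\<Sum>ls\<in>{ls. length ls = p \<and> sum_list ls = n - l}.
       of_nat (multinomial n (l # ls)) * (gs a b l k * (\<Prod>i<p. gs a b (ls ! i) (ks ! i)))) =
      of_nat (n choose l) * gs a b l k *
       (\<Sum>ls\<in>{ls. length ls = p \<and> sum_list ls = n - l}.
         of_nat (multinomial (n - l) ls) * (\<Prod>i<p. gs a b (ls ! i) (ks ! i)))"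
      unfolding sum_distrib_left
    proof (rule sum.cong[OF refl])
      fix ls assume "ls \<in> {ls. length ls = p \<and> sum_list ls = n - l}"
      then have e: "n = l + sum_list ls" and e2: "n - l = sum_list ls" using l by auto
      show "of_nat (multinomial n (l # ls)) * (gs a b l k * (\<Prod>i<p. gs a b (ls ! i) (ks ! i))) =
         of_nat (n choose l) * gs a b l k * (of_nat (multinomial (n - l) ls) * (\<Prod>i<p. gs a b (ls ! i) (ks ! i)))"
        unfolding e2 by (subst e, subst e, subst multinomial_Cons) (simp add: algebra_simps)
    qed
  qed
  also have "\<dots> = (\<Sum>l\<le>n. of_nat (n choose l) * gs a b l k *
       (of_nat (multinomial K ks) * gs a b (n - l) K))"
    using Cons.IH unfolding K_def p_def by simp
  also have "\<dots> = of_nat (multinomial K ks) * (\<Sum>l\<le>n. of_nat (n choose l) * (gs a b l k * gs a b (n - l) K))"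
    by (simp add: sum_distrib_left algebra_simps)
  also have "\<dots> = of_nat (multinomial K ks) * (of_nat ((k + K) choose k) * gs a b n (k + K))"
    by (simp add: prod2)
  also have "\<dots> = of_nat (multinomial (sum_list (k # ks)) (k # ks)) * gs a b n (sum_list (k # ks))"
    by (simp add: K_def multinomial_Cons)
  finally show ?case by simp
qed

theorem theorem7:
  fixes \<alpha> \<beta> :: "'a::field_char_0" and n p :: nat and ks :: "nat list"
  assumes "p \<ge> 1" and "length ks = p"
  shows "of_nat (multinomial (sum_list ks) ks) * gen_stirling \<alpha> \<beta> n (sum_list ks) =
    (\<Sum>ls\<in>{ls. length ls = p \<and> sum_list ls = n}.
       of_nat (multinomial n ls) * (\<Prod>i<p. gen_stirling \<alpha> \<beta> (ls ! i) (ks ! i)))"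
  unfolding gen_stirling_gs using main[of ks \<alpha> \<beta> n] assms(2) by simp

end
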